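(* For every $n\ge 0$ and every integer $r\ge 1$, $\mathbf{P}[M_n=r]\le \mu^n p_r$. If moreover $p$ is unbounded, then as $r\to\infty$, $$\mathbf{P}[M_n=r]\sim \mu^n p_r\quad\text{and}\quad \mathbf{P}[M_n>r]\sim \mu^n\bar F(r),$$ where the first asymptotic equivalence is understood along the infinite set $\{r: p_r>0\}$ (i.e. $\mathbf{P}[M_n=r]/p_r\to\mu^n$ as $r\to\infty$ with $p_r>0$).
   Context: Let $p=(p_0,p_1,p_2,\dots)$ be a probability distribution on the nonnegative integers with mean $\mu=\sum_k kp_k\in(0,\infty)$, and let $\tau(p)$ be a Galton–Watson tree with offspring distribution $p$: it starts with a single root at generation $0$, and every vertex independently has $k$ children with probability $p_k$. The out-degree of a vertex is its number of children. $M_n$ denotes the maximal out-degree among the vertices of generation $n$ (with $M_n=0$ if generation $n$ is empty). $\bar F(r)=\sum_{k>r}p_k$. The distribution $p$ is called unbounded if the set $\{r:p_r>0\}$ is unbounded. *)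

theory Defs
  imports "HOL-Probability.Probability" "HOL-Library.Landau_Symbols"
begin

text \<open>Ulam--Harris encoding of a Galton--Watson tree: every potential vertex
 (a finite list of child indices) carries an independent offspring number with
 law p; a realisation is a function xi from vertices to out-degrees.\<close>

definition GW_offspring :: "nat pmf \<Rightarrow> (nat list \<Rightarrow> nat) measure" where
  "GW_offspring p = PiM UNIV (\<lambda>_::nat list. measure_pmf p)"

fun gen :: "(nat list \<Rightarrow> nat) \<Rightarrow> nat \<Rightarrow> nat list set" where
  "gen xi 0 = {[]}"
| "gen xi (Suc n) = {v @ [i] | v i. v \<in> gen xi n \<and> i < xi v}"

definition maxdeg :: "(nat list \<Rightarrow> nat) \<Rightarrow> nat \<Rightarrow> nat" where
  "maxdeg xi n = (if gen xi n = {} then 0 else Max (xi ` gen xi n))"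

definition offspring_mean :: "nat pmf \<Rightarrow> real" where
  "offspring_mean p = (\<Sum>k. real k * pmf p k)"

definition Fbar :: "nat pmf \<Rightarrow> nat \<Rightarrow> real" where
  "Fbar p r = measure_pmf.prob p {r<..}"

end

theory Submission
  imports Defs
begin


lemma gen_Suc_UN: "gen xi (Suc n) = (\<Union>v\<in>gen xi n. (\<lambda>i. v @ [i]) ` {..<xi v})"
  by auto

lemma gen_length: "v \<in> gen xi n \<Longrightarrow> length v = n"
  by (induction n arbitrary: v) auto

lemma gen_finite: "finite (gen xi n)"
  by (induction n) (simp_all only: gen_Suc_UN, auto)

lemma gen_cong: "(\<And>v. length v < n \<Longrightarrow> xi v = xi' v) \<Longrightarrow> gen xi n = gen xi' n"
proof (induction n)
  case 0 then show ?case by simp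
next
  case (Suc n)
  have IH: "gen xi n = gen xi' n" using Suc by auto
  have "\<And>v. v \<in> gen xi n \<Longrightarrow> xi v = xi' v" using Suc.prems gen_length by fastforce
  then show ?case using IH by (auto simp: gen_Suc_UN simp del: gen.simps)
qed

lemma card_gen_Suc: "card (gen xi (Suc n)) = (\<Sum>v\<in>gen xi n. xi v)"
proof -
  have "card (gen xi (Suc n)) = (\<Sum>v\<in>gen xi n. card ((\<lambda>i. v @ [i]) ` {..<xi v}))"
    unfolding gen_Suc_UN
    by (rule card_UN_disjoint) (auto simp: gen_finite)
  also have "\<dots> = (\<Sum>v\<in>gen xi n. xi v)"
    by (intro sum.cong refl) (simp add: card_image inj_on_def)
  finally show ?thesis .
qed

lemma maxdeg_le_iff: "maxdeg xi n \<le> r \<longleftrightarrow> (\<forall>v\<in>gen xi n. xi v \<le> r)"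
  unfolding maxdeg_def using gen_finite[of xi n] by auto

definition ch :: "(nat list \<Rightarrow> nat) \<Rightarrow> nat list set \<Rightarrow> nat list set" where
  "ch f S = (\<Union>v\<in>S. (\<lambda>i. v @ [i]) ` {..<f v})"

lemma gen_Suc_ch: "gen xi (Suc n) = ch xi (gen xi n)"
  unfolding ch_def by auto

lemma ch_eq_iff: "ch f S = T \<longleftrightarrow> T \<subseteq> (\<Union>v\<in>S. range (\<lambda>i. v @ [i])) \<and> (\<forall>v\<in>S. \<forall>i. (v @ [i] \<in> T) = (i < f v))"
proof
  assume "ch f S = T" then show "T \<subseteq> (\<Union>v\<in>S. range (\<lambda>i. v @ [i])) \<and> (\<forall>v\<in>S. \<forall>i. (v @ [i] \<in> T) = (i < f v))"
    by (auto simp: ch_def)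
next
  assume H: "T \<subseteq> (\<Union>v\<in>S. range (\<lambda>i. v @ [i])) \<and> (\<forall>v\<in>S. \<forall>i. (v @ [i] \<in> T) = (i < f v))"
  show "ch f S = T"
  proof (rule set_eqI)
    fix x show "x \<in> ch f S \<longleftrightarrow> x \<in> T"
    proof
      assume "x \<in> ch f S" then obtain v i where "v\<in>S" "i < f v" "x = v@[i]" by (auto simp: ch_def)
      with H show "x\<in>T" by auto
    next
      assume "x\<in>T" with H obtain v i where "v\<in>S" "x = v@[i]" by blast
      with H \<open>x\<in>T\<close> show "x\<in>ch f S" by (auto simp: ch_def)
    qed
  qed
qed

lemma sets_coord:
  assumes "v \<in> A"
  shows "{f \<in> space (PiM A (\<lambda>_. measure_pmf p)). Q (f v)} \<in> sets (PiM A (\<lambda>_. measure_pmf p))"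
proof -
  have "(\<lambda>f. f v) \<in> PiM A (\<lambda>_. measure_pmf p) \<rightarrow>\<^sub>M measure_pmf p"
    using assms by (rule measurable_component_singleton)
  from measurable_sets[OF this, of "{x. Q x}"] show ?thesis
    by (simp add: vimage_def Int_def conj_commute)
qed

lemma sets_ch:
  assumes "finite S" "S \<subseteq> A"
  shows "{f \<in> space (PiM A (\<lambda>_. measure_pmf p)). ch f S = T} \<in> sets (PiM A (\<lambda>_. measure_pmf p))"
proof -
  let ?M = "PiM A (\<lambda>_. measure_pmf p)"
  have eq: "{f \<in> space ?M. ch f S = T} =
     (if T \<subseteq> (\<Union>v\<in>S. range (\<lambda>i. v @ [i])) then space ?M else {}) -
     (\<Union>v\<in>S. \<Union>i. {f \<in> space ?M. (v @ [i] \<in> T) \<noteq> (i < f v)})"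
    unfolding ch_eq_iff by auto
  show ?thesis unfolding eq
    using assms
    by (intro sets.Diff sets.countable_UN'') (auto intro!: sets_coord countable_finite)
qed

lemma sets_gen:
  assumes "{v. length v < n} \<subseteq> A"
  shows "{f \<in> space (PiM A (\<lambda>_. measure_pmf p)). gen f n = S} \<in> sets (PiM A (\<lambda>_. measure_pmf p))"
  using assms
proof (induction n arbitrary: S)
  case 0
  have "{f \<in> space (PiM A (\<lambda>_. measure_pmf p)). gen f 0 = S} = (if S = {[]} then space (PiM A (\<lambda>_. measure_pmf p)) else {})"
    by auto
  then show ?case by simp
next
  case (Suc n T)
  let ?M = "PiM A (\<lambda>_. measure_pmf p)"
  define C where "C = {S. finite S \<and> S \<subseteq> {v::nat list. length v = n}}"
  have C: "countable C" unfolding C_def by (rule countable_Collect_finite_subset) simp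
  have eq: "{f \<in> space ?M. gen f (Suc n) = T} = (\<Union>S\<in>C. {f \<in> space ?M. gen f n = S} \<inter> {f \<in> space ?M. ch f S = T})"
  proof (rule set_eqI, rule iffI)
    fix f assume f: "f \<in> {f \<in> space ?M. gen f (Suc n) = T}"
    have "gen f n \<in> C" unfolding C_def using gen_finite gen_length by auto
    then show "f \<in> (\<Union>S\<in>C. {f \<in> space ?M. gen f n = S} \<inter> {f \<in> space ?M. ch f S = T})"
      using f by (auto simp: gen_Suc_ch simp del: gen.simps)
  qed (auto simp: gen_Suc_ch simp del: gen.simps)
  have IH: "{f \<in> space ?M. gen f n = S} \<in> sets ?M" for S
    using Suc.prems by (intro Suc.IH) auto
  have "{f \<in> space ?M. ch f S = T} \<in> sets ?M" if "S \<in> C" for S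
    using that Suc.prems unfolding C_def by (intro sets_ch) auto
  then show ?case unfolding eq using C IH
    by (intro sets.countable_UN'' sets.Int) auto
qed

lemma space_GW[simp]: "space (GW_offspring p) = UNIV"
  by (auto simp: GW_offspring_def space_PiM)

lemma prob_space_GW: "prob_space (GW_offspring p)"
  unfolding GW_offspring_def by (intro prob_space_PiM measure_pmf.prob_space_axioms)

lemma product_prob_space_pmf: "product_prob_space (\<lambda>_::nat list. measure_pmf p)"
  by (intro product_prob_spaceI measure_pmf.prob_space_axioms)

lemma GW_component: "distr (GW_offspring p) (measure_pmf p) (\<lambda>\<omega>. \<omega> v) = measure_pmf p"
  unfolding GW_offspring_def
  by (rule product_prob_space.PiM_component[OF product_prob_space_pmf]) simp

lemma measure_GW_component: "measure (GW_offspring p) {\<omega>. \<omega> v \<in> B} = measure p B"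
proof -
  have "measure p B = measure (distr (GW_offspring p) (measure_pmf p) (\<lambda>\<omega>. \<omega> v)) B"
    by (simp add: GW_component)
  also have "\<dots> = measure (GW_offspring p) ((\<lambda>\<omega>. \<omega> v) -` B \<inter> space (GW_offspring p))"
    by (rule measure_distr) (auto simp: GW_offspring_def)
  finally show ?thesis by (simp add: vimage_def)
qed

lemma indep_coord: "prob_space.indep_vars (GW_offspring p) (\<lambda>_. measure_pmf p) (\<lambda>v \<omega>. \<omega> v) UNIV"
proof -
  interpret prob_space "GW_offspring p" by (rule prob_space_GW)
  have rv: "random_variable (measure_pmf p) (\<lambda>\<omega>. \<omega> v)" for v
    unfolding GW_offspring_def by (rule measurable_component_singleton) simp
  show ?thesis
  proof (subst indep_vars_iff_distr_eq_PiM[OF _ rv])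
    show "distr (GW_offspring p) (Pi\<^sub>M UNIV (\<lambda>_. measure_pmf p)) (\<lambda>x. \<lambda>i\<in>UNIV. x i) =
      Pi\<^sub>M UNIV (\<lambda>i. distr (GW_offspring p) (measure_pmf p) (\<lambda>x. x i))"
    proof -
      have "(\<lambda>x. restrict x UNIV) = (\<lambda>x::nat list \<Rightarrow> nat. x)" by (auto simp: restrict_def)
      then show ?thesis unfolding GW_component by (simp add: GW_offspring_def distr_id2)
    qed
  qed simp
qed

lemma sets_GW_gen: "{\<omega>. gen \<omega> n = S} \<in> sets (GW_offspring p)"
  using sets_gen[of n UNIV p S] by (simp add: GW_offspring_def space_PiM)

lemma indep_gen:
  assumes S: "finite S" "S \<subseteq> {v. length v = n}"
  shows "measure (GW_offspring p) ({\<omega>. gen \<omega> n = S} \<inter> {\<omega>. \<forall>v\<in>S. \<omega> v \<in> B v})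
     = measure (GW_offspring p) {\<omega>. gen \<omega> n = S} * (\<Prod>v\<in>S. measure p (B v))"
proof -
  interpret prob_space "GW_offspring p" by (rule prob_space_GW)
  define A where "A = {v::nat list. length v < n}"
  define K where "K = case_option A (\<lambda>v. {v})"
  define L where "L = insert None (Some ` S)"
  have ind: "indep_vars (\<lambda>j. PiM (K j) (\<lambda>_. measure_pmf p)) (\<lambda>j \<omega>. restrict (\<lambda>i. \<omega> i) (K j)) L"
  proof (rule indep_vars_restrict[OF indep_coord])
    show "disjoint_family_on K L"
      using S unfolding disjoint_family_on_def K_def L_def A_def by (auto split: option.splits)
  qed simp
  define E where "E = case_option {g \<in> space (PiM A (\<lambda>_. measure_pmf p)). gen g n = S}
                      (\<lambda>v. {g \<in> space (PiM {v} (\<lambda>_. measure_pmf p)). g v \<in> B v})"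
  have E: "E j \<in> sets (PiM (K j) (\<lambda>_. measure_pmf p))" if "j \<in> L" for j
  proof (cases j)
    case None then show ?thesis unfolding E_def K_def by (auto intro!: sets_gen simp: A_def)
  next
    case (Some v) then show ?thesis unfolding E_def K_def by (auto intro!: sets_coord)
  qed
  have L: "L \<noteq> {}" "finite L" using S by (auto simp: L_def)
  have D: "prob (\<Inter>j\<in>L. (\<lambda>\<omega>. restrict (\<lambda>i. \<omega> i) (K j)) -` E j \<inter> space (GW_offspring p)) =
        (\<Prod>j\<in>L. prob ((\<lambda>\<omega>. restrict (\<lambda>i. \<omega> i) (K j)) -` E j \<inter> space (GW_offspring p)))"
    by (rule indep_varsD[OF ind L order_refl E])
  have None: "(\<lambda>\<omega>. restrict (\<lambda>i. \<omega> i) (K None)) -` E None \<inter> space (GW_offspring p) = {\<omega>. gen \<omega> n = S}"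
  proof -
    have "gen (restrict \<omega> A) n = gen \<omega> n" for \<omega>
      by (rule gen_cong) (auto simp: A_def)
    then show ?thesis by (auto simp: K_def E_def space_PiM)
  qed
  have Some: "(\<lambda>\<omega>. restrict (\<lambda>i. \<omega> i) (K (Some v))) -` E (Some v) \<inter> space (GW_offspring p) = {\<omega>. \<omega> v \<in> B v}" for v
    by (auto simp: K_def E_def space_PiM)
  have "(\<Inter>j\<in>L. (\<lambda>\<omega>. restrict (\<lambda>i. \<omega> i) (K j)) -` E j \<inter> space (GW_offspring p))
      = {\<omega>. gen \<omega> n = S} \<inter> {\<omega>. \<forall>v\<in>S. \<omega> v \<in> B v}"
    unfolding L_def using None Some by auto
  moreover have "(\<Prod>j\<in>L. prob ((\<lambda>\<omega>. restrict (\<lambda>i. \<omega> i) (K j)) -` E j \<inter> space (GW_offspring p)))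
      = prob {\<omega>. gen \<omega> n = S} * (\<Prod>v\<in>S. measure p (B v))"
    unfolding L_def using S
    using None Some by (simp add: prod.reindex measure_GW_component)
  ultimately show ?thesis using D by simp
qed

definition Cg :: "nat \<Rightarrow> nat list set set" where
  "Cg n = {S. finite S \<and> S \<subseteq> {v. length v = n}}"

lemma countable_Cg: "countable (Cg n)"
  unfolding Cg_def by (rule countable_Collect_finite_subset) simp

lemma gen_in_Cg: "gen \<omega> n \<in> Cg n"
  unfolding Cg_def using gen_finite gen_length by auto

lemma sets_GW_coord: "{\<omega>. Q (\<omega> v)} \<in> sets (GW_offspring p)"
  using sets_coord[of v UNIV p Q] by (simp add: GW_offspring_def space_PiM)

lemma sets_GW_all: "finite S \<Longrightarrow> {\<omega>. \<forall>v\<in>S. Q v (\<omega> v)} \<in> sets (GW_offspring p)"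
proof -
  assume "finite S"
  have "{\<omega>. \<forall>v\<in>S. Q v (\<omega> v)} = UNIV - (\<Union>v\<in>S. {\<omega>. \<not> Q v (\<omega> v)})" by auto
  also have "\<dots> \<in> sets (GW_offspring p)"
    using \<open>finite S\<close>
    by (intro sets.Diff sets.countable_UN'' countable_finite sets_GW_coord)
       (auto intro: sets.top[of "GW_offspring p", simplified])
  finally show ?thesis .
qed

lemma gen_decomp_eq: "{\<omega>. Q (gen \<omega> n) \<omega>} = (\<Union>S\<in>Cg n. {\<omega>. gen \<omega> n = S} \<inter> {\<omega>. Q S \<omega>})"
  using gen_in_Cg by auto

lemma sets_gen_decomp:
  assumes "\<And>S. S \<in> Cg n \<Longrightarrow> {\<omega>. Q S \<omega>} \<in> sets (GW_offspring p)"
  shows "{\<omega>. Q (gen \<omega> n) \<omega>} \<in> sets (GW_offspring p)"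
  unfolding gen_decomp_eq using assms countable_Cg
  by (intro sets.countable_UN'' sets.Int sets_GW_gen) auto

lemma emeasure_gen_decomp:
  assumes "\<And>S. S \<in> Cg n \<Longrightarrow> {\<omega>. Q S \<omega>} \<in> sets (GW_offspring p)"
  shows "emeasure (GW_offspring p) {\<omega>. Q (gen \<omega> n) \<omega>} =
    (\<integral>\<^sup>+S. emeasure (GW_offspring p) ({\<omega>. gen \<omega> n = S} \<inter> {\<omega>. Q S \<omega>}) \<partial>count_space (Cg n))"
  unfolding gen_decomp_eq using assms countable_Cg
  by (intro emeasure_UN_countable) (auto intro!: sets.Int sets_GW_gen simp: disjoint_family_on_def)

lemma nn_integral_gen_decomp:
  assumes f: "f \<in> borel_measurable (GW_offspring p)"
  shows "(\<integral>\<^sup>+\<omega>. f \<omega> \<partial>GW_offspring p) =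
    (\<integral>\<^sup>+S. (\<integral>\<^sup>+\<omega>. f \<omega> * indicator {\<omega>. gen \<omega> n = S} \<omega> \<partial>GW_offspring p) \<partial>count_space (Cg n))"
proof -
  have "f \<omega> = (\<integral>\<^sup>+S. f \<omega> * indicator {\<omega>. gen \<omega> n = S} \<omega> \<partial>count_space (Cg n))" for \<omega>
  proof -
    have "(\<integral>\<^sup>+S. f \<omega> * indicator {\<omega>. gen \<omega> n = S} \<omega> \<partial>count_space (Cg n))
        = f \<omega> * (\<integral>\<^sup>+S. of_bool (gen \<omega> n = S) \<partial>count_space (Cg n))"
      by (subst nn_integral_cmult[symmetric]) (auto simp: indicator_def intro!: nn_integral_cong)
    also have "(\<integral>\<^sup>+S. of_bool (gen \<omega> n = S) \<partial>count_space (Cg n)) = of_bool (\<exists>S\<in>Cg n. gen \<omega> n = S)"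
      by (rule of_bool_Bex_eq_nn_integral[symmetric]) auto
    finally show ?thesis using gen_in_Cg by auto
  qed
  then have "(\<integral>\<^sup>+\<omega>. f \<omega> \<partial>GW_offspring p) =
     (\<integral>\<^sup>+\<omega>. (\<integral>\<^sup>+S. f \<omega> * indicator {\<omega>. gen \<omega> n = S} \<omega> \<partial>count_space (Cg n)) \<partial>GW_offspring p)"
    by simp
  also have "\<dots> = (\<integral>\<^sup>+S. (\<integral>\<^sup>+\<omega>. f \<omega> * indicator {\<omega>. gen \<omega> n = S} \<omega> \<partial>GW_offspring p) \<partial>count_space (Cg n))"
    using countable_Cg f sets_GW_gen
    by (intro nn_integral_count_space_nn_integral) auto
  finally show ?thesis .
qed

lemma nat_decomp:
  assumes h: "\<And>k. {\<omega>. h \<omega> = (k::nat)} \<in> sets (GW_offspring p)" and E: "E \<in> sets (GW_offspring p)"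
  shows "(\<integral>\<^sup>+\<omega>. f (h \<omega>) * indicator E \<omega> \<partial>GW_offspring p) = (\<Sum>k. f k * emeasure (GW_offspring p) (E \<inter> {\<omega>. h \<omega> = k}))"
proof -
  have "f (h \<omega>) * indicator E \<omega> = (\<Sum>k. f k * indicator (E \<inter> {\<omega>. h \<omega> = k}) \<omega>)" for \<omega>
  proof -
    have "(\<lambda>k. f k * indicator (E \<inter> {\<omega>. h \<omega> = k}) \<omega>) = (\<lambda>k. if k = h \<omega> then f k * indicator E \<omega> else 0)"
      by (auto simp: indicator_def)
    then show ?thesis using sums_single[of "h \<omega>" "\<lambda>k. f k * indicator E \<omega>"] sums_unique by metis
  qed
  then have "(\<integral>\<^sup>+\<omega>. f (h \<omega>) * indicator E \<omega> \<partial>GW_offspring p) =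
      (\<integral>\<^sup>+\<omega>. (\<Sum>k. f k * indicator (E \<inter> {\<omega>. h \<omega> = k}) \<omega>) \<partial>GW_offspring p)" by simp
  also have "\<dots> = (\<Sum>k. \<integral>\<^sup>+\<omega>. f k * indicator (E \<inter> {\<omega>. h \<omega> = k}) \<omega> \<partial>GW_offspring p)"
    using h E by (intro nn_integral_suminf) auto
  also have "\<dots> = (\<Sum>k. f k * emeasure (GW_offspring p) (E \<inter> {\<omega>. h \<omega> = k}))"
    using h E by (intro suminf_cong nn_integral_cmult_indicator) auto
  finally show ?thesis .
qed

lemma sets_GW_UNIV[simp]: "UNIV \<in> sets (GW_offspring p)"
  using sets.top[of "GW_offspring p"] by simp

lemma sets_Z: "{\<omega>. card (gen \<omega> n) = z} \<in> sets (GW_offspring p)"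
proof -
  have "{\<omega>. card S = z} \<in> sets (GW_offspring p)" for S :: "nat list set"
    by (cases "card S = z") auto
  then show ?thesis by (intro sets_gen_decomp[where Q="\<lambda>S \<omega>. card S = z"])
qed

lemma sets_Z_le: "{\<omega>. card (gen \<omega> n) = z \<and> (\<forall>v\<in>gen \<omega> n. \<omega> v \<le> r)} \<in> sets (GW_offspring p)"
proof -
  have "{\<omega>. card S = z \<and> (\<forall>v\<in>S. \<omega> v \<le> r)} \<in> sets (GW_offspring p)" if "S \<in> Cg n" for S :: "nat list set"
  proof (cases "card S = z")
    case True
    with that show ?thesis using sets_GW_all[where S=S and p=p and Q="\<lambda>_ x. x \<le> r"] by (simp add: Cg_def)
  qed simp
  then show ?thesis by (intro sets_gen_decomp[where Q="\<lambda>S \<omega>. card S = z \<and> (\<forall>v\<in>S. \<omega> v \<le> r)"])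
qed

lemma meas_Z: "(\<lambda>\<omega>. card (gen \<omega> n)) \<in> GW_offspring p \<rightarrow>\<^sub>M count_space UNIV"
  unfolding measurable_count_space_eq2_countable
  using sets_Z by (auto simp: vimage_def)

lemma borel_Z: "(\<lambda>\<omega>. ennreal (of_nat (card (gen \<omega> n)))) \<in> borel_measurable (GW_offspring p)"
  using measurable_compose[OF meas_Z measurable_count_space_eq1[THEN iffD2, of "\<lambda>z::nat. ennreal (of_nat z)" UNIV borel]] by simp

lemma borel_coord: "(\<lambda>\<omega>. ennreal (of_nat (\<omega> v))) \<in> borel_measurable (GW_offspring p)"
proof -
  have "(\<lambda>\<omega>. \<omega> v) \<in> GW_offspring p \<rightarrow>\<^sub>M count_space UNIV"
    unfolding measurable_count_space_eq2_countable
    using sets_GW_coord by (auto simp: vimage_def)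
  from measurable_compose[OF this measurable_count_space_eq1[THEN iffD2, of "\<lambda>z::nat. ennreal (of_nat z)" UNIV borel]]
  show ?thesis by simp
qed

lemma mean_ennreal:
  assumes "summable (\<lambda>k. real k * pmf p k)"
  shows "(\<Sum>k. ennreal (real k * pmf p k)) = ennreal (offspring_mean p)"
proof -
  have "(\<lambda>k. real k * pmf p k) sums offspring_mean p"
    using assms unfolding offspring_mean_def by (rule summable_sums)
  then have "(\<lambda>k. ennreal (real k * pmf p k)) sums ennreal (offspring_mean p)"
    by (subst sums_ennreal) (auto simp: offspring_mean_def intro!: suminf_nonneg assms)
  then show ?thesis by (rule sums_unique[symmetric])
qed

lemma coord_integral:
  assumes mean: "summable (\<lambda>k. real k * pmf p k)"
    and S: "S \<in> Cg n" "v \<in> S"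
  shows "(\<integral>\<^sup>+\<omega>. ennreal (of_nat (\<omega> v)) * indicator {\<omega>. gen \<omega> n = S} \<omega> \<partial>GW_offspring p)
    = ennreal (measure (GW_offspring p) {\<omega>. gen \<omega> n = S}) * ennreal (offspring_mean p)"
proof -
  interpret prob_space "GW_offspring p" by (rule prob_space_GW)
  let ?m = "measure (GW_offspring p) {\<omega>. gen \<omega> n = S}"
  have "(\<integral>\<^sup>+\<omega>. ennreal (of_nat (\<omega> v)) * indicator {\<omega>. gen \<omega> n = S} \<omega> \<partial>GW_offspring p)
     = (\<Sum>k. ennreal (of_nat k) * emeasure (GW_offspring p) ({\<omega>. gen \<omega> n = S} \<inter> {\<omega>. \<omega> v = k}))"
    by (rule nat_decomp[where h="\<lambda>\<omega>. \<omega> v" and f="\<lambda>k. ennreal (of_nat k)"])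
       (auto intro: sets_GW_coord sets_GW_gen)
  also have "\<dots> = (\<Sum>k. ennreal ?m * ennreal (real k * pmf p k))"
  proof (rule suminf_cong)
    fix k
    define B where "B = (\<lambda>w. if w = v then {k} else (UNIV :: nat set))"
    have set: "{\<omega>. \<forall>w\<in>S. \<omega> w \<in> B w} = {\<omega>. \<omega> v = k}"
      using S(2) by (auto simp: B_def)
    have prod: "(\<Prod>w\<in>S. measure p (B w)) = pmf p k"
    proof -
      have "(\<Prod>w\<in>S. measure p (B w)) = (\<Prod>w\<in>S. if w = v then pmf p k else 1)"
        by (intro prod.cong) (auto simp: B_def measure_pmf_single)
      also have "\<dots> = pmf p k" using S by (simp add: prod.delta' Cg_def)
      finally show ?thesis .
    qed
    have "emeasure (GW_offspring p) ({\<omega>. gen \<omega> n = S} \<inter> {\<omega>. \<omega> v = k}) = ennreal (?m * pmf p k)"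
      using indep_gen[of S n p B] S unfolding set prod
      by (simp add: emeasure_eq_measure Cg_def)
    then show "ennreal (of_nat k) * emeasure (GW_offspring p) ({\<omega>. gen \<omega> n = S} \<inter> {\<omega>. \<omega> v = k}) =
      ennreal ?m * ennreal (real k * pmf p k)"
      by (simp add: ennreal_mult'[symmetric] mult_ac)
  qed
  also have "\<dots> = ennreal ?m * ennreal (offspring_mean p)"
    by (simp add: ennreal_suminf_cmult mean_ennreal[OF mean])
  finally show ?thesis .
qed

lemma E_step:
  assumes mean: "summable (\<lambda>k. real k * pmf p k)"
  shows "(\<integral>\<^sup>+\<omega>. ennreal (of_nat (card (gen \<omega> (Suc n)))) \<partial>GW_offspring p)
    = ennreal (offspring_mean p) * (\<integral>\<^sup>+\<omega>. ennreal (of_nat (card (gen \<omega> n))) \<partial>GW_offspring p)"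
proof -
  interpret prob_space "GW_offspring p" by (rule prob_space_GW)
  have "(\<integral>\<^sup>+\<omega>. ennreal (of_nat (card (gen \<omega> (Suc n)))) \<partial>GW_offspring p)
     = (\<integral>\<^sup>+S. (\<integral>\<^sup>+\<omega>. ennreal (of_nat (card (gen \<omega> (Suc n)))) * indicator {\<omega>. gen \<omega> n = S} \<omega> \<partial>GW_offspring p) \<partial>count_space (Cg n))"
    by (rule nn_integral_gen_decomp[OF borel_Z])
  also have "\<dots> = (\<integral>\<^sup>+S. ennreal (offspring_mean p) * (of_nat (card S) * emeasure (GW_offspring p) {\<omega>. gen \<omega> n = S}) \<partial>count_space (Cg n))"
  proof (rule nn_integral_cong)
    fix S assume "S \<in> space (count_space (Cg n))"
    then have S: "S \<in> Cg n" by simp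
    then have fin: "finite S" by (simp add: Cg_def)
    have "(\<integral>\<^sup>+\<omega>. ennreal (of_nat (card (gen \<omega> (Suc n)))) * indicator {\<omega>. gen \<omega> n = S} \<omega> \<partial>GW_offspring p)
       = (\<integral>\<^sup>+\<omega>. (\<Sum>v\<in>S. ennreal (of_nat (\<omega> v)) * indicator {\<omega>. gen \<omega> n = S} \<omega>) \<partial>GW_offspring p)"
      by (intro nn_integral_cong) (auto simp: card_gen_Suc indicator_def simp del: gen.simps)
    also have "\<dots> = (\<Sum>v\<in>S. \<integral>\<^sup>+\<omega>. ennreal (of_nat (\<omega> v)) * indicator {\<omega>. gen \<omega> n = S} \<omega> \<partial>GW_offspring p)"
      using borel_coord sets_GW_gen by (intro nn_integral_sum) auto
    also have "\<dots> = (\<Sum>v\<in>S. ennreal (measure (GW_offspring p) {\<omega>. gen \<omega> n = S}) * ennreal (offspring_mean p))"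
      using S mean by (intro sum.cong refl coord_integral)
    also have "\<dots> = ennreal (offspring_mean p) * (of_nat (card S) * emeasure (GW_offspring p) {\<omega>. gen \<omega> n = S})"
      by (simp add: emeasure_eq_measure mult_ac)
    finally show "(\<integral>\<^sup>+\<omega>. ennreal (of_nat (card (gen \<omega> (Suc n)))) * indicator {\<omega>. gen \<omega> n = S} \<omega> \<partial>GW_offspring p)
       = ennreal (offspring_mean p) * (of_nat (card S) * emeasure (GW_offspring p) {\<omega>. gen \<omega> n = S})" .
  qed
  also have "\<dots> = ennreal (offspring_mean p) * (\<integral>\<^sup>+S. of_nat (card S) * emeasure (GW_offspring p) {\<omega>. gen \<omega> n = S} \<partial>count_space (Cg n))"
    by (rule nn_integral_cmult) simp
  also have "(\<integral>\<^sup>+S. of_nat (card S) * emeasure (GW_offspring p) {\<omega>. gen \<omega> n = S} \<partial>count_space (Cg n))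
     = (\<integral>\<^sup>+S. (\<integral>\<^sup>+\<omega>. ennreal (of_nat (card (gen \<omega> n))) * indicator {\<omega>. gen \<omega> n = S} \<omega> \<partial>GW_offspring p) \<partial>count_space (Cg n))"
  proof (rule nn_integral_cong)
    fix S
    have "(\<integral>\<^sup>+\<omega>. ennreal (of_nat (card (gen \<omega> n))) * indicator {\<omega>. gen \<omega> n = S} \<omega> \<partial>GW_offspring p)
      = (\<integral>\<^sup>+\<omega>. of_nat (card S) * indicator {\<omega>. gen \<omega> n = S} \<omega> \<partial>GW_offspring p)"
      by (intro nn_integral_cong) (auto simp: indicator_def ennreal_of_nat_eq_real_of_nat)
    also have "\<dots> = of_nat (card S) * emeasure (GW_offspring p) {\<omega>. gen \<omega> n = S}"
      using sets_GW_gen by (rule nn_integral_cmult_indicator)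
    finally show "of_nat (card S) * emeasure (GW_offspring p) {\<omega>. gen \<omega> n = S} =
      (\<integral>\<^sup>+\<omega>. ennreal (of_nat (card (gen \<omega> n))) * indicator {\<omega>. gen \<omega> n = S} \<omega> \<partial>GW_offspring p)" by simp
  qed
  also have "\<dots> = (\<integral>\<^sup>+\<omega>. ennreal (of_nat (card (gen \<omega> n))) \<partial>GW_offspring p)"
    by (rule nn_integral_gen_decomp[OF borel_Z, symmetric])
  finally show ?thesis .
qed

lemma E_gen:
  assumes mean: "summable (\<lambda>k. real k * pmf p k)" and pos: "offspring_mean p \<ge> 0"
  shows "(\<integral>\<^sup>+\<omega>. ennreal (of_nat (card (gen \<omega> n))) \<partial>GW_offspring p) = ennreal (offspring_mean p ^ n)"
proof (induction n)
  case 0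
  interpret prob_space "GW_offspring p" by (rule prob_space_GW)
  show ?case using emeasure_space_1 by simp
next
  case (Suc n)
  then show ?case using E_step[OF mean, of n] pos by (simp add: ennreal_mult'[symmetric] ennreal_power)
qed

lemma Z_le_prob:
  "measure (GW_offspring p) {\<omega>. card (gen \<omega> n) = z \<and> (\<forall>v\<in>gen \<omega> n. \<omega> v \<le> r)}
   = measure (GW_offspring p) {\<omega>. card (gen \<omega> n) = z} * measure p {..r} ^ z"
proof -
  interpret prob_space "GW_offspring p" by (rule prob_space_GW)
  let ?F = "measure p {..r}"
  have s1: "{\<omega>. card S = z \<and> (\<forall>v\<in>S. \<omega> v \<le> r)} \<in> sets (GW_offspring p)" if "S \<in> Cg n" for S :: "nat list set"
  proof (cases "card S = z")
    case True
    with that show ?thesis using sets_GW_all[where S=S and p=p and Q="\<lambda>_ x. x \<le> r"] by (simp add: Cg_def)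
  qed simp
  have s2: "{\<omega>. card S = z} \<in> sets (GW_offspring p)" for S :: "nat list set"
    by (cases "card S = z") auto
  have "emeasure (GW_offspring p) {\<omega>. card (gen \<omega> n) = z \<and> (\<forall>v\<in>gen \<omega> n. \<omega> v \<le> r)}
     = (\<integral>\<^sup>+S. emeasure (GW_offspring p) ({\<omega>. gen \<omega> n = S} \<inter> {\<omega>. card S = z \<and> (\<forall>v\<in>S. \<omega> v \<le> r)}) \<partial>count_space (Cg n))"
    by (rule emeasure_gen_decomp[where Q="\<lambda>S \<omega>. card S = z \<and> (\<forall>v\<in>S. \<omega> v \<le> r)", OF s1])
  also have "\<dots> = (\<integral>\<^sup>+S. ennreal (?F ^ z) * emeasure (GW_offspring p) ({\<omega>. gen \<omega> n = S} \<inter> {\<omega>. card S = z}) \<partial>count_space (Cg n))"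
  proof (rule nn_integral_cong)
    fix S assume "S \<in> space (count_space (Cg n))"
    then have S: "finite S" "S \<subseteq> {v. length v = n}" by (auto simp: Cg_def)
    show "emeasure (GW_offspring p) ({\<omega>. gen \<omega> n = S} \<inter> {\<omega>. card S = z \<and> (\<forall>v\<in>S. \<omega> v \<le> r)}) =
      ennreal (?F ^ z) * emeasure (GW_offspring p) ({\<omega>. gen \<omega> n = S} \<inter> {\<omega>. card S = z})"
    proof (cases "card S = z")
      case True
      have "{\<omega>. card S = z \<and> (\<forall>v\<in>S. \<omega> v \<le> r)} = {\<omega>. \<forall>v\<in>S. \<omega> v \<in> {..r}}" using True by auto
      moreover have "(\<Prod>v\<in>S. measure p {..r}) = ?F ^ z" using True by simp
      ultimately show ?thesis
        using indep_gen[OF S, of p "\<lambda>_. {..r}"] True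
        by (simp add: emeasure_eq_measure ennreal_mult'[symmetric] mult_ac)
    qed simp
  qed
  also have "\<dots> = ennreal (?F ^ z) * (\<integral>\<^sup>+S. emeasure (GW_offspring p) ({\<omega>. gen \<omega> n = S} \<inter> {\<omega>. card S = z}) \<partial>count_space (Cg n))"
    by (rule nn_integral_cmult) simp
  also have "(\<integral>\<^sup>+S. emeasure (GW_offspring p) ({\<omega>. gen \<omega> n = S} \<inter> {\<omega>. card S = z}) \<partial>count_space (Cg n))
     = emeasure (GW_offspring p) {\<omega>. card (gen \<omega> n) = z}"
    by (rule emeasure_gen_decomp[where Q="\<lambda>S \<omega>. card S = z", OF s2, symmetric])
  finally show ?thesis
    by (simp add: emeasure_eq_measure ennreal_mult'[symmetric] mult_ac)
qed

lemma Z_mean_sums: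
  assumes mean: "summable (\<lambda>k. real k * pmf p k)" and pos: "offspring_mean p \<ge> 0"
  shows "(\<lambda>z. real z * measure (GW_offspring p) {\<omega>. card (gen \<omega> n) = z}) sums (offspring_mean p ^ n)"
proof -
  interpret prob_space "GW_offspring p" by (rule prob_space_GW)
  have "(\<integral>\<^sup>+\<omega>. ennreal (of_nat (card (gen \<omega> n))) * indicator UNIV \<omega> \<partial>GW_offspring p)
     = (\<Sum>z. ennreal (of_nat z) * emeasure (GW_offspring p) (UNIV \<inter> {\<omega>. card (gen \<omega> n) = z}))"
    by (rule nat_decomp[where h="\<lambda>\<omega>. card (gen \<omega> n)" and f="\<lambda>z. ennreal (of_nat z)"]) (auto intro: sets_Z)
  then have "(\<Sum>z. ennreal (real z * measure (GW_offspring p) {\<omega>. card (gen \<omega> n) = z})) = ennreal (offspring_mean p ^ n)"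
    using E_gen[OF mean pos, of n] by (simp add: emeasure_eq_measure ennreal_mult')
  moreover have "(\<lambda>z. ennreal (real z * measure (GW_offspring p) {\<omega>. card (gen \<omega> n) = z})) sums
     (\<Sum>z. ennreal (real z * measure (GW_offspring p) {\<omega>. card (gen \<omega> n) = z}))"
    by (rule summable_sums[OF summableI])
  ultimately have "(\<lambda>z. ennreal (real z * measure (GW_offspring p) {\<omega>. card (gen \<omega> n) = z})) sums ennreal (offspring_mean p ^ n)"
    by simp
  then show ?thesis using pos by (subst (asm) sums_ennreal) auto
qed

lemma M_eq_sums:
  assumes r: "r \<ge> 1"
  shows "(\<lambda>z. measure (GW_offspring p) {\<omega>. card (gen \<omega> n) = z} * measure p {..r} ^ z
            - measure (GW_offspring p) {\<omega>. card (gen \<omega> n) = z} * measure p {..r-1} ^ z)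
         sums measure (GW_offspring p) {\<omega>. maxdeg \<omega> n = r}"
proof -
  interpret prob_space "GW_offspring p" by (rule prob_space_GW)
  define Ale where "Ale z r = {\<omega>. card (gen \<omega> n) = z \<and> (\<forall>v\<in>gen \<omega> n. \<omega> v \<le> r)}" for z r
  define A where "A z = Ale z r - Ale z (r-1)" for z
  have sA: "Ale z r' \<in> sets (GW_offspring p)" for z r' unfolding Ale_def by (rule sets_Z_le)
  have "(\<lambda>z. measure (GW_offspring p) (A z)) sums measure (GW_offspring p) (\<Union>z. A z)"
    by (rule finite_measure_UNION) (auto simp: A_def intro!: sets.Diff sA, auto simp: disjoint_family_on_def A_def Ale_def)
  moreover have "(\<Union>z. A z) = {\<omega>. maxdeg \<omega> n = r}"
  proof -
    have *: "\<omega> \<in> (\<Union>z. A z) \<longleftrightarrow> maxdeg \<omega> n \<le> r \<and> \<not> maxdeg \<omega> n \<le> r - 1" for \<omega>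
      by (auto simp: A_def Ale_def maxdeg_le_iff)
    show ?thesis
    proof (rule set_eqI)
      fix \<omega> show "\<omega> \<in> (\<Union>z. A z) \<longleftrightarrow> \<omega> \<in> {\<omega>. maxdeg \<omega> n = r}"
        unfolding * mem_Collect_eq using r by linarith
    qed
  qed
  moreover have "measure (GW_offspring p) (A z) =
     measure (GW_offspring p) {\<omega>. card (gen \<omega> n) = z} * measure p {..r} ^ z
            - measure (GW_offspring p) {\<omega>. card (gen \<omega> n) = z} * measure p {..r-1} ^ z" for z
  proof -
    have "measure (GW_offspring p) (A z) = measure (GW_offspring p) (Ale z r) - measure (GW_offspring p) (Ale z (r-1))"
      unfolding A_def by (rule finite_measure_Diff[OF sA sA]) (auto simp: Ale_def)
    then show ?thesis unfolding Ale_def Z_le_prob .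
  qed
  ultimately show ?thesis by simp
qed

lemma M_gt_sums:
  shows "(\<lambda>z. measure (GW_offspring p) {\<omega>. card (gen \<omega> n) = z}
            - measure (GW_offspring p) {\<omega>. card (gen \<omega> n) = z} * measure p {..r} ^ z)
         sums measure (GW_offspring p) {\<omega>. maxdeg \<omega> n > r}"
proof -
  interpret prob_space "GW_offspring p" by (rule prob_space_GW)
  define Ale where "Ale z r = {\<omega>. card (gen \<omega> n) = z \<and> (\<forall>v\<in>gen \<omega> n. \<omega> v \<le> r)}" for z r
  define A where "A z = {\<omega>. card (gen \<omega> n) = z} - Ale z r" for z
  have sA: "Ale z r' \<in> sets (GW_offspring p)" for z r' unfolding Ale_def by (rule sets_Z_le)
  have "(\<lambda>z. measure (GW_offspring p) (A z)) sums measure (GW_offspring p) (\<Union>z. A z)"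
    by (rule finite_measure_UNION) (auto simp: A_def intro!: sets.Diff sA sets_Z, auto simp: disjoint_family_on_def A_def Ale_def)
  moreover have "(\<Union>z. A z) = {\<omega>. maxdeg \<omega> n > r}"
  proof -
    have *: "\<omega> \<in> (\<Union>z. A z) \<longleftrightarrow> \<not> maxdeg \<omega> n \<le> r" for \<omega>
      by (auto simp: A_def Ale_def maxdeg_le_iff)
    show ?thesis
    proof (rule set_eqI)
      fix \<omega> show "\<omega> \<in> (\<Union>z. A z) \<longleftrightarrow> \<omega> \<in> {\<omega>. maxdeg \<omega> n > r}"
        unfolding * mem_Collect_eq by linarith
    qed
  qed
  moreover have "measure (GW_offspring p) (A z) =
     measure (GW_offspring p) {\<omega>. card (gen \<omega> n) = z}
            - measure (GW_offspring p) {\<omega>. card (gen \<omega> n) = z} * measure p {..r} ^ z" for z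
  proof -
    have "measure (GW_offspring p) (A z) = measure (GW_offspring p) {\<omega>. card (gen \<omega> n) = z} - measure (GW_offspring p) (Ale z r)"
      unfolding A_def by (rule finite_measure_Diff[OF sets_Z sA]) (auto simp: Ale_def)
    then show ?thesis unfolding Ale_def Z_le_prob .
  qed
  ultimately show ?thesis by simp
qed




definition gsum :: "nat \<Rightarrow> real \<Rightarrow> real \<Rightarrow> real" where
  "gsum z x y = (\<Sum>i<z. y ^ (z - Suc i) * x ^ i)"

lemma gsum_diff: "x ^ z - y ^ z = (x - y) * gsum z x y"
  unfolding gsum_def by (rule power_diff_sumr2)

lemma gsum_nonneg: "0 \<le> x \<Longrightarrow> 0 \<le> y \<Longrightarrow> 0 \<le> gsum z x y"
  unfolding gsum_def by (intro sum_nonneg) auto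

lemma gsum_le: "0 \<le> x \<Longrightarrow> 0 \<le> y \<Longrightarrow> x \<le> 1 \<Longrightarrow> y \<le> 1 \<Longrightarrow> gsum z x y \<le> real z"
proof -
  assume a: "0 \<le> x" "0 \<le> y" "x \<le> 1" "y \<le> 1"
  have "gsum z x y \<le> (\<Sum>i<z. 1)" unfolding gsum_def
    by (intro sum_mono mult_le_one power_le_one) (use a in auto)
  then show ?thesis by simp
qed

lemma gsum_tendsto:
  assumes "(X \<longlongrightarrow> 1) F" "(Y \<longlongrightarrow> 1) F"
  shows "((\<lambda>r. gsum z (X r) (Y r)) \<longlongrightarrow> real z) F"
proof -
  have "((\<lambda>r. \<Sum>i<z. Y r ^ (z - Suc i) * X r ^ i) \<longlongrightarrow> (\<Sum>i<z. (1::real) ^ (z - Suc i) * 1 ^ i)) F"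
    by (intro tendsto_sum tendsto_mult tendsto_power assms)
  then show ?thesis by (simp add: gsum_def)
qed

lemma F_nonneg: fixes p :: "nat pmf" shows "0 \<le> measure p {..r}" by simp
lemma F_le1: fixes p :: "nat pmf" shows "measure p {..r} \<le> 1" by (rule measure_pmf.prob_le_1)
lemma F_mono: fixes p :: "nat pmf" shows "r \<le> s \<Longrightarrow> measure p {..r} \<le> measure p {..s}"
  by (intro measure_pmf.finite_measure_mono) auto

lemma F_diff: fixes p :: "nat pmf" shows "r \<ge> 1 \<Longrightarrow> measure p {..r} - measure p {..r-1} = pmf p r"
proof -
  assume "r \<ge> 1"
  then obtain s where s: "r = Suc s" by (cases r) auto
  show ?thesis unfolding s by (simp add: measure_measure_pmf_finite)
qed

lemma F_lim: fixes p :: "nat pmf" shows "(\<lambda>r. measure p {..r}) \<longlonglongrightarrow> 1"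
proof -
  have "(\<lambda>r. measure p {..r}) \<longlonglongrightarrow> measure p (\<Union>r. {..r::nat})"
    by (rule measure_pmf.finite_Lim_measure_incseq) (auto simp: incseq_def)
  moreover have "(\<Union>r. {..r::nat}) = UNIV" by auto
  ultimately show ?thesis by simp
qed

lemma F_lim': fixes p :: "nat pmf" shows "(\<lambda>r. measure p {..r-1}) \<longlonglongrightarrow> 1"
  using filterlim_compose[OF F_lim filterlim_minus_const_nat_at_top[of 1]] by simp

lemma Fbar_eq: "Fbar p r = 1 - measure p {..r}"
proof -
  have "UNIV - {..r} = {r<..}" by auto
  then show ?thesis unfolding Fbar_def
    using measure_pmf.prob_compl[of "{..r}" p] by simp
qed

lemma Fbar_pos:
  assumes "infinite {r. pmf p r > 0}"
  shows "Fbar p r > 0"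
proof -
  have "\<exists>k>r. pmf p k > 0"
  proof (rule ccontr)
    assume "\<not> (\<exists>k>r. pmf p k > 0)"
    then have "{r. pmf p r > 0} \<subseteq> {..r}" by (auto simp: not_less)
    then show False using assms finite_subset by blast
  qed
  then obtain k where k: "k > r" "pmf p k > 0" by blast
  have "pmf p k \<le> Fbar p r" unfolding Fbar_def measure_pmf_single[symmetric]
    using k by (intro measure_pmf.finite_measure_mono) auto
  then show ?thesis using k by simp
qed

lemma bound_part:
  fixes p :: "nat pmf" and a :: "nat \<Rightarrow> real"
  assumes a0: "\<And>z. a z \<ge> 0" and m: "(\<lambda>z. real z * a z) sums m" and r: "r \<ge> 1"
    and S: "(\<lambda>z. a z * measure p {..r} ^ z - a z * measure p {..r-1} ^ z) sums Pr"
  shows "Pr \<le> m * pmf p r"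
proof (rule sums_le[OF _ S sums_mult2[OF m]])
  fix z
  let ?x = "measure p {..r}" and ?y = "measure p {..r-1}"
  have "a z * ?x ^ z - a z * ?y ^ z = (a z * pmf p r) * gsum z ?x ?y"
    using F_diff[OF r, of p] by (simp add: right_diff_distrib[symmetric] gsum_diff)
  also have "\<dots> \<le> (a z * pmf p r) * real z"
    by (intro mult_left_mono gsum_le F_le1) (auto simp: a0)
  finally show "a z * ?x ^ z - a z * ?y ^ z \<le> real z * a z * pmf p r" by (simp add: mult_ac)
qed

lemma Fi_not_bot:
  fixes p :: "nat pmf"
  assumes "infinite {r. pmf p r > 0}"
  shows "inf sequentially (principal {r. pmf p r > 0}) \<noteq> bot"
proof
  assume "inf sequentially (principal {r. pmf p r > 0}) = bot"
  then have "eventually (\<lambda>_. False) (inf sequentially (principal {r. pmf p r > 0}))"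
    by simp
  then obtain N where "\<And>x. x \<ge> N \<Longrightarrow> \<not> pmf p x > 0"
    unfolding eventually_inf_principal eventually_sequentially by auto
  then have "{r. pmf p r > 0} \<subseteq> {..<N}" by (auto simp: not_le[symmetric])
  then show False using assms finite_subset by blast
qed

lemma limit_part:
  fixes p :: "nat pmf" and a :: "nat \<Rightarrow> real"
  assumes a0: "\<And>z. a z \<ge> 0" and m: "(\<lambda>z. real z * a z) sums m"
    and inf: "infinite {r. pmf p r > 0}"
    and S: "\<And>r. r \<ge> 1 \<Longrightarrow> (\<lambda>z. a z * measure p {..r} ^ z - a z * measure p {..r-1} ^ z) sums Pr r"
  shows "((\<lambda>r. Pr r / pmf p r) \<longlongrightarrow> m) (inf sequentially (principal {r. pmf p r > 0}))"
proof -
  let ?Fi = "inf sequentially (principal {r. pmf p r > 0})"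
  define A where "A z r = a z * gsum z (measure p {..r}) (measure p {..r-1})" for z r
  define b where "b z = a z * real z" for z
  have "b = (\<lambda>z. real z * a z)" by (rule ext) (simp add: b_def mult.commute)
  then have bm: "b sums m" using m by simp
  have lim: "((\<lambda>r. A z r) \<longlongrightarrow> b z) ?Fi" for z
  proof -
    have "((\<lambda>r. A z r) \<longlongrightarrow> b z) sequentially"
      unfolding A_def b_def by (intro tendsto_mult tendsto_const gsum_tendsto F_lim F_lim')
    then show ?thesis by (rule tendsto_mono[rotated]) simp
  qed
  have bound: "eventually (\<lambda>(k,n). norm (A k n) \<le> b k) (at_top \<times>\<^sub>F ?Fi)"
  proof (rule always_eventually, clarify)
    fix k n
    have "0 \<le> A k n" unfolding A_def by (intro mult_nonneg_nonneg gsum_nonneg a0) auto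
    moreover have "A k n \<le> b k" unfolding A_def b_def
      by (intro mult_left_mono gsum_le F_le1 a0) auto
    ultimately show "norm (A k n) \<le> b k" by simp
  qed
  have T: "((\<lambda>r. suminf (\<lambda>k. A k r)) \<longlongrightarrow> suminf b) ?Fi"
    using tannerys_theorem[OF lim bound sums_summable[OF bm] Fi_not_bot[OF inf]] by blast
  have ev: "eventually (\<lambda>r. suminf (\<lambda>k. A k r) = Pr r / pmf p r) ?Fi"
    unfolding eventually_inf_principal
    using eventually_ge_at_top[of 1]
  proof eventually_elim
    case (elim r)
    show ?case
    proof
      assume q: "r \<in> {r. pmf p r > 0}"
      have "(\<lambda>z. (a z * measure p {..r} ^ z - a z * measure p {..r-1} ^ z) / pmf p r) sums (Pr r / pmf p r)"
        by (rule sums_divide[OF S[OF elim]])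
      moreover have "(a z * measure p {..r} ^ z - a z * measure p {..r-1} ^ z) / pmf p r = A z r" for z
        using F_diff[OF elim, of p] q unfolding A_def
        by (simp add: right_diff_distrib[symmetric] gsum_diff)
      ultimately show "suminf (\<lambda>k. A k r) = Pr r / pmf p r" by (simp add: sums_iff)
    qed
  qed
  show ?thesis using tendsto_cong[OF ev] T sums_unique[OF bm] by simp
qed

lemma tail_part:
  fixes p :: "nat pmf" and a :: "nat \<Rightarrow> real"
  assumes a0: "\<And>z. a z \<ge> 0" and m: "(\<lambda>z. real z * a z) sums m"
    and inf: "infinite {r. pmf p r > 0}"
    and S: "\<And>r. (\<lambda>z. a z - a z * measure p {..r} ^ z) sums Pt r"
  shows "((\<lambda>r. Pt r / Fbar p r) \<longlongrightarrow> m) sequentially"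
proof -
  define A where "A z r = a z * gsum z 1 (measure p {..r})" for z r
  define b where "b z = a z * real z" for z
  have "b = (\<lambda>z. real z * a z)" by (rule ext) (simp add: b_def mult.commute)
  then have bm: "b sums m" using m by simp
  have lim: "((\<lambda>r. A z r) \<longlongrightarrow> b z) sequentially" for z
    unfolding A_def b_def by (intro tendsto_mult tendsto_const gsum_tendsto F_lim)
  have bound: "eventually (\<lambda>(k,n). norm (A k n) \<le> b k) (at_top \<times>\<^sub>F sequentially)"
  proof (rule always_eventually, clarify)
    fix k n
    have "0 \<le> A k n" unfolding A_def by (intro mult_nonneg_nonneg gsum_nonneg a0) auto
    moreover have "A k n \<le> b k" unfolding A_def b_def
      by (intro mult_left_mono gsum_le F_le1 a0) auto
    ultimately show "norm (A k n) \<le> b k" by simp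
  qed
  have T: "((\<lambda>r. suminf (\<lambda>k. A k r)) \<longlongrightarrow> suminf b) sequentially"
    using tannerys_theorem[OF lim bound sums_summable[OF bm]] by simp
  have eq: "suminf (\<lambda>k. A k r) = Pt r / Fbar p r" for r
  proof -
    have "(\<lambda>z. (a z - a z * measure p {..r} ^ z) / Fbar p r) sums (Pt r / Fbar p r)"
      by (rule sums_divide[OF S])
    moreover have "(a z - a z * measure p {..r} ^ z) / Fbar p r = A z r" for z
    proof -
      have "a z - a z * measure p {..r} ^ z = a z * (1 ^ z - measure p {..r} ^ z)"
        by (simp add: right_diff_distrib)
      then show ?thesis
        using Fbar_pos[OF inf, of r] unfolding A_def gsum_diff Fbar_eq by simp
    qed
    ultimately show ?thesis by (simp add: sums_iff)
  qed
  show ?thesis using T sums_unique[OF bm] unfolding eq by simp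
qed

theorem proposition2p2:
  fixes p :: "nat pmf"
  assumes mean_finite: "summable (\<lambda>k. real k * pmf p k)"
    and mean_pos: "offspring_mean p > 0"
  shows "(\<forall>n r. r \<ge> 1 \<longrightarrow>
            measure (GW_offspring p) {xi \<in> space (GW_offspring p). maxdeg xi n = r}
              \<le> offspring_mean p ^ n * pmf p r)
       \<and> (infinite {r. pmf p r > 0} \<longrightarrow>
            (\<forall>n.
              ((\<lambda>r. measure (GW_offspring p) {xi \<in> space (GW_offspring p). maxdeg xi n = r} / pmf p r)
                 \<longlongrightarrow> offspring_mean p ^ n) (inf sequentially (principal {r. pmf p r > 0}))
            \<and> (\<lambda>r. measure (GW_offspring p) {xi \<in> space (GW_offspring p). maxdeg xi n > r})
                 \<sim>[sequentially] (\<lambda>r. offspring_mean p ^ n * Fbar p r)))"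
proof (intro conjI allI impI)
  have pos: "offspring_mean p \<ge> 0" using mean_pos by simp
  fix n r :: nat assume r: "r \<ge> 1"
  show "measure (GW_offspring p) {xi \<in> space (GW_offspring p). maxdeg xi n = r}
              \<le> offspring_mean p ^ n * pmf p r"
    using bound_part[OF _ Z_mean_sums[OF mean_finite pos] r M_eq_sums[OF r]] by simp
next
  have pos: "offspring_mean p \<ge> 0" using mean_pos by simp
  fix n assume inf: "infinite {r. pmf p r > 0}"
  show "((\<lambda>r. measure (GW_offspring p) {xi \<in> space (GW_offspring p). maxdeg xi n = r} / pmf p r)
                 \<longlongrightarrow> offspring_mean p ^ n) (inf sequentially (principal {r. pmf p r > 0}))"
    using limit_part[OF _ Z_mean_sums[OF mean_finite pos] inf M_eq_sums] by simp
  have "((\<lambda>r. measure (GW_offspring p) {xi. maxdeg xi n > r} / Fbar p r) \<longlongrightarrow> offspring_mean p ^ n) sequentially"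
    using tail_part[OF _ Z_mean_sums[OF mean_finite pos] inf M_gt_sums] by simp
  from asymp_equivI'_const[OF this] mean_pos
  show "(\<lambda>r. measure (GW_offspring p) {xi \<in> space (GW_offspring p). maxdeg xi n > r})
                 \<sim>[sequentially] (\<lambda>r. offspring_mean p ^ n * Fbar p r)" by simp
qed

end
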